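(* Let $Y(1),Y(2),\dots$ be i.i.d. real random variables with $\mathbf E Y(1)=0$, and let $T(n)=Y(1)+\dots+Y(n)$. Fix $p\ge1$ and assume $\mathbf E|Y(1)|^q<\infty$ for some $q\ge\max(p,2)$. Let $(\mathcal F_k)_{k\ge0}$ be a filtration such that each $Y(k)$ is $\mathcal F_k$-measurable and independent of $\mathcal F_{k-1}$, and let $\sigma$ be a stopping time with respect to $(\mathcal F_k)$. Then for every $r>\max\big(\frac{p-1}{2},1\big)$, every $t>0$ and every $n\ge1$, $$\mathbf E\big[(T(n))^{p-1};\,T(n)>t,\ \sigma>n\big]\le r^q\frac{q}{q+1-p}\mathbf E|Y(1)|^q\,t^{p-1-q}\sum_{i=1}^n\mathbf P(\sigma>i-1)+\big(er\,\mathbf E Y(1)^2\big)^r n^r\frac{2r}{2r+1-p}\,t^{p-1-2r}.$$ *)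

theory Defs
  imports "HOL-Probability.Probability"
begin

definition stopping_time_enat :: "(nat \<Rightarrow> 'a measure) \<Rightarrow> ('a \<Rightarrow> enat) \<Rightarrow> bool" where
  "stopping_time_enat F \<sigma> \<longleftrightarrow> (\<forall>k::nat. Measurable.pred (F k) (\<lambda>x. \<sigma> x \<le> enat k))"

end

theory Submission
  imports Defs
begin


lemma exp_scaled_le:
  fixes a l :: real
  assumes a: "0 \<le> a" and l: "0 \<le> l" "l \<le> 1"
  shows "exp (l * a) - 1 - l * a \<le> l\<^sup>2 * (exp a - 1 - a)"
proof -
  have s1: "(\<lambda>n. (l*a)^(n+2) /\<^sub>R fact (n+2)) sums (exp (l*a) - (\<Sum>i<2. (l*a)^i /\<^sub>R fact i))"
    using sums_split_initial_segment[OF exp_converges[of "l*a"], of 2] by simp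
  have s2: "(\<lambda>n. a^(n+2) /\<^sub>R fact (n+2)) sums (exp a - (\<Sum>i<2. a^i /\<^sub>R fact i))"
    using sums_split_initial_segment[OF exp_converges[of "a"], of 2] by simp
  have s3: "(\<lambda>n. l\<^sup>2 * (a^(n+2) /\<^sub>R fact (n+2))) sums (l\<^sup>2 * (exp a - (\<Sum>i<2. a^i /\<^sub>R fact i)))"
    by (rule sums_mult[OF s2])
  have le: "(l*a)^(n+2) /\<^sub>R fact (n+2) \<le> l\<^sup>2 * (a^(n+2) /\<^sub>R fact (n+2))" for n
  proof -
    have "l^(n+2) \<le> l^2" using l by (intro power_decreasing) auto
    then have "l^(n+2) * a^(n+2) \<le> l^2 * a^(n+2)" using a by (intro mult_right_mono) auto
    then have "(l*a)^(n+2) \<le> l\<^sup>2 * a^(n+2)" by (simp only: power_mult_distrib)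
    then show ?thesis by (simp add: divide_right_mono)
  qed
  have "exp (l*a) - (\<Sum>i<2. (l*a)^i /\<^sub>R fact i) \<le> l\<^sup>2 * (exp a - (\<Sum>i<2. a^i /\<^sub>R fact i))"
    by (rule sums_le[OF le s1 s3])
  then show ?thesis by (simp add: numeral_2_eq_2 algebra_simps)
qed

lemma exp_neg_quad:
  fixes s :: real
  assumes "s \<le> 0"
  shows "exp s \<le> 1 + s + s\<^sup>2 / 2"
proof -
  let ?f = "\<lambda>x::real. exp x - 1 - x - x\<^sup>2/2"
  have "?f s \<le> ?f 0"
  proof (rule DERIV_nonneg_imp_nondecreasing[OF assms])
    fix x :: real
    show "\<exists>y. (?f has_real_derivative y) (at x) \<and> 0 \<le> y"
      by (rule exI[of _ "exp x - 1 - x"]) (auto intro!: derivative_eq_intros, use exp_ge_add_one_self[of x] in linarith)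
  qed
  then show ?thesis by simp
qed

lemma exp_trunc_bound:
  fixes h y u :: real
  assumes h: "h > 0" and y: "y > 0" and u: "u \<le> y"
  shows "exp (h*u) \<le> 1 + h*u + (exp (h*y) - 1 - h*y) / y\<^sup>2 * u\<^sup>2"
proof (cases "u \<le> 0")
  case True
  have "exp (h*u) \<le> 1 + h*u + (h*u)\<^sup>2/2" using True h by (intro exp_neg_quad) (simp add: mult_nonneg_nonpos)
  also have "(h*u)\<^sup>2/2 = (h*y)\<^sup>2/2 / y\<^sup>2 * u\<^sup>2" using y by (simp add: field_simps power2_eq_square)
  also have "\<dots> \<le> (exp (h*y) - 1 - h*y) / y\<^sup>2 * u\<^sup>2"
    using exp_lower_Taylor_quadratic[of "h*y"] h y
    by (intro mult_right_mono divide_right_mono) auto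
  finally show ?thesis by simp
next
  case False
  define l where "l = u / y"
  have l: "0 \<le> l" "l \<le> 1" using False u y by (auto simp: l_def)
  have "exp (l*(h*y)) - 1 - l*(h*y) \<le> l\<^sup>2 * (exp (h*y) - 1 - h*y)"
    using exp_scaled_le[of "h*y" l] l h y by auto
  moreover have "l*(h*y) = h*u" using y by (simp add: l_def)
  moreover have "l\<^sup>2 = u\<^sup>2 / y\<^sup>2" by (simp add: l_def power_divide)
  ultimately have "exp (h*u) - 1 - h*u \<le> u\<^sup>2 / y\<^sup>2 * (exp (h*y) - 1 - h*y)" by simp
  then show ?thesis by (simp add: field_simps)
qed



lemma powr_tail_integral:
  fixes c a p t :: real
  assumes c: "c \<ge> 0" and a: "a > p - 1" and p: "p \<ge> 1" and t: "t > 0"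
  shows "(\<integral>\<^sup>+x. ennreal ((p-1) * x powr (p-2) * (c * x powr (-a))) * indicator {t..} x \<partial>lborel)
         = ennreal (c * (p-1) / (a+1-p) * t powr (p-1-a))"
proof -
  define F where "F x = - (c * (p-1) / (a+1-p) * x powr (p-1-a))" for x :: real
  have eq: "(p-1) * x powr (p-2) * (c * x powr (-a)) = c * (p-1) * x powr (p-2-a)" if "x > 0" for x :: real
    using that by (simp add: powr_add[symmetric] algebra_simps)
  have "(\<integral>\<^sup>+x. ennreal ((p-1) * x powr (p-2) * (c * x powr (-a))) * indicator {t..} x \<partial>lborel)
     = 0 - F t"
  proof (rule nn_integral_FTC_atLeast)
    show "(\<lambda>x. (p-1) * x powr (p-2) * (c * x powr (-a))) \<in> borel_measurable borel" by measurable
    fix x assume x: "t \<le> x"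
    then have x0: "x > 0" using t by linarith
    show "0 \<le> (p-1) * x powr (p-2) * (c * x powr (-a))" using p c by simp
    have "(F has_real_derivative - (c * (p-1) / (a+1-p) * ((p-1-a) * x powr (p-1-a-1)))) (at x)"
      unfolding F_def using x0 a by (auto intro!: derivative_eq_intros)
    moreover have "- (c * (p-1) / (a+1-p) * ((p-1-a) * x powr (p-1-a-1))) = (p-1) * x powr (p-2) * (c * x powr (-a))"
    proof -
      have ne: "a+1-p \<noteq> 0" using a by simp
      show ?thesis using ne x0 by (subst eq[OF x0]) (simp add: field_simps)
    qed
    ultimately show "(F has_real_derivative (p-1) * x powr (p-2) * (c * x powr (-a))) (at x)" by simp
  next
    have "((\<lambda>x::real. x powr (p-1-a)) \<longlongrightarrow> 0) at_top"
      using a by (intro tendsto_neg_powr filterlim_ident) auto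
    then have "((\<lambda>x. - (c * (p-1) / (a+1-p) * x powr (p-1-a))) \<longlongrightarrow> - (c * (p-1) / (a+1-p) * 0)) at_top"
      by (intro tendsto_intros)
    then show "(F \<longlongrightarrow> 0) at_top" unfolding F_def by simp
  qed
  also have "0 - F t = c * (p-1) / (a+1-p) * t powr (p-1-a)" by (simp add: F_def)
  finally show ?thesis .
qed

lemma (in prob_space) layer_cake_bound:
  fixes Z :: "'a \<Rightarrow> real" and P :: "'a \<Rightarrow> bool"
  assumes Z[measurable]: "Z \<in> borel_measurable M" and P[measurable]: "Measurable.pred M P"
    and p: "p \<ge> 1" and t: "t > 0" and A: "A \<ge> 0" and C: "C \<ge> 0" and a: "a > p - 1" and b: "b > p - 1"
    and tail: "\<And>x. x \<ge> t \<Longrightarrow> prob {\<omega>\<in>space M. P \<omega> \<and> x \<le> Z \<omega>} \<le> A * x powr (-a) + C * x powr (-b)"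
  shows "(\<integral>\<^sup>+\<omega>. indicator {\<omega>. Z \<omega> > t \<and> P \<omega>} \<omega> * ennreal (Z \<omega> powr (p-1)) \<partial>M)
     \<le> ennreal (A * (a / (a+1-p)) * t powr (p-1-a) + C * (b / (b+1-p)) * t powr (p-1-b))"
proof -
  define g where "g x = (p-1) * x powr (p-2)" for x :: real
  have g_nn: "g x \<ge> 0" for x using p by (simp add: g_def)
  have ftc: "ennreal (z powr (p-1)) = ennreal (t powr (p-1)) + (\<integral>\<^sup>+x. ennreal (g x) * indicator {t..z} x \<partial>lborel)"
    if z: "z > t" for z
  proof -
    have "(\<integral>\<^sup>+x. ennreal (g x) * indicator {t..z} x \<partial>lborel) = ennreal (z powr (p-1) - t powr (p-1))"
    proof (rule nn_integral_FTC_Icc)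
      show "g \<in> borel_measurable borel" unfolding g_def by measurable
      fix x assume "x \<in> {t..z}"
      then have x0: "x > 0" using t by auto
      show "((\<lambda>x. x powr (p-1)) has_real_derivative g x) (at x)"
        using x0 by (auto intro!: derivative_eq_intros simp: g_def)
      show "0 \<le> g x" by (rule g_nn)
    qed (use z in auto)
    moreover have "t powr (p-1) \<le> z powr (p-1)" using z t p by (intro powr_mono2) auto
    ultimately show ?thesis by (simp add: ennreal_plus[symmetric] del: ennreal_plus)
  qed
  have "(\<integral>\<^sup>+\<omega>. indicator {\<omega>. Z \<omega> > t \<and> P \<omega>} \<omega> * ennreal (Z \<omega> powr (p-1)) \<partial>M)
      = (\<integral>\<^sup>+\<omega>. indicator {\<omega>. Z \<omega> > t \<and> P \<omega>} \<omega> * ennreal (t powr (p-1))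
          + (\<integral>\<^sup>+x. ennreal (g x) * indicator {t..} x * indicator {\<omega>\<in>space M. P \<omega> \<and> t < Z \<omega> \<and> x \<le> Z \<omega>} \<omega> \<partial>lborel) \<partial>M)"
  proof (intro nn_integral_cong)
    fix \<omega> assume \<omega>: "\<omega> \<in> space M"
    show "indicator {\<omega>. Z \<omega> > t \<and> P \<omega>} \<omega> * ennreal (Z \<omega> powr (p-1))
      = indicator {\<omega>. Z \<omega> > t \<and> P \<omega>} \<omega> * ennreal (t powr (p-1))
          + (\<integral>\<^sup>+x. ennreal (g x) * indicator {t..} x * indicator {\<omega>\<in>space M. P \<omega> \<and> t < Z \<omega> \<and> x \<le> Z \<omega>} \<omega> \<partial>lborel)"
    proof (cases "Z \<omega> > t \<and> P \<omega>")
      case True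
      have "(\<integral>\<^sup>+x. ennreal (g x) * indicator {t..} x * indicator {\<omega>\<in>space M. P \<omega> \<and> t < Z \<omega> \<and> x \<le> Z \<omega>} \<omega> \<partial>lborel)
          = (\<integral>\<^sup>+x. ennreal (g x) * indicator {t..Z \<omega>} x \<partial>lborel)"
        using True \<omega> by (intro nn_integral_cong) (auto simp: indicator_def)
      then show ?thesis using True ftc[of "Z \<omega>"] by simp
    next
      case False
      have "(\<integral>\<^sup>+x. ennreal (g x) * indicator {t..} x * indicator {\<omega>\<in>space M. P \<omega> \<and> t < Z \<omega> \<and> x \<le> Z \<omega>} \<omega> \<partial>lborel)
          = (\<integral>\<^sup>+x. 0 \<partial>(lborel::real measure))"
        by (intro nn_integral_cong) (use False in \<open>simp add: indicator_def\<close>)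
      then show ?thesis using False by (auto simp: indicator_def)
    qed
  qed
  also have "\<dots> = (\<integral>\<^sup>+\<omega>. indicator {\<omega>. Z \<omega> > t \<and> P \<omega>} \<omega> * ennreal (t powr (p-1)) \<partial>M)
          + (\<integral>\<^sup>+\<omega>. (\<integral>\<^sup>+x. ennreal (g x) * indicator {t..} x * indicator {\<omega>\<in>space M. P \<omega> \<and> t < Z \<omega> \<and> x \<le> Z \<omega>} \<omega> \<partial>lborel) \<partial>M)"
    unfolding g_def by (intro nn_integral_add) measurable
  also have "(\<integral>\<^sup>+\<omega>. (\<integral>\<^sup>+x. ennreal (g x) * indicator {t..} x * indicator {\<omega>\<in>space M. P \<omega> \<and> t < Z \<omega> \<and> x \<le> Z \<omega>} \<omega> \<partial>lborel) \<partial>M)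
      = (\<integral>\<^sup>+x. (\<integral>\<^sup>+\<omega>. ennreal (g x) * indicator {t..} x * indicator {\<omega>\<in>space M. P \<omega> \<and> t < Z \<omega> \<and> x \<le> Z \<omega>} \<omega> \<partial>M) \<partial>lborel)"
  proof -
    interpret pair_sigma_finite M lborel ..
    show ?thesis
      by (rule Fubini'[symmetric]) (unfold g_def, measurable)
  qed
  finally have eq1: "(\<integral>\<^sup>+\<omega>. indicator {\<omega>. Z \<omega> > t \<and> P \<omega>} \<omega> * ennreal (Z \<omega> powr (p-1)) \<partial>M) = (\<integral>\<^sup>+\<omega>. indicator {\<omega>. Z \<omega> > t \<and> P \<omega>} \<omega> * ennreal (t powr (p-1)) \<partial>M) + (\<integral>\<^sup>+x. (\<integral>\<^sup>+\<omega>. ennreal (g x) * indicator {t..} x * indicator {\<omega>\<in>space M. P \<omega> \<and> t < Z \<omega> \<and> x \<le> Z \<omega>} \<omega> \<partial>M) \<partial>lborel)" .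
  have "(\<integral>\<^sup>+x. (\<integral>\<^sup>+\<omega>. ennreal (g x) * indicator {t..} x * indicator {\<omega>\<in>space M. P \<omega> \<and> t < Z \<omega> \<and> x \<le> Z \<omega>} \<omega> \<partial>M) \<partial>lborel)
      \<le> (\<integral>\<^sup>+x. ennreal (g x * (A * x powr (-a))) * indicator {t..} x + ennreal (g x * (C * x powr (-b))) * indicator {t..} x \<partial>lborel)"
  proof (rule nn_integral_mono)
    fix x :: real
    have "(\<integral>\<^sup>+\<omega>. ennreal (g x) * indicator {t..} x * indicator {\<omega>\<in>space M. P \<omega> \<and> t < Z \<omega> \<and> x \<le> Z \<omega>} \<omega> \<partial>M)
        = ennreal (g x) * indicator {t..} x * emeasure M {\<omega>\<in>space M. P \<omega> \<and> t < Z \<omega> \<and> x \<le> Z \<omega>}"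
      by (rule nn_integral_cmult_indicator) measurable
    also have "\<dots> \<le> ennreal (g x * (A * x powr (-a))) * indicator {t..} x + ennreal (g x * (C * x powr (-b))) * indicator {t..} x"
    proof (cases "t \<le> x")
      case True
      have "emeasure M {\<omega>\<in>space M. P \<omega> \<and> t < Z \<omega> \<and> x \<le> Z \<omega>} \<le> emeasure M {\<omega>\<in>space M. P \<omega> \<and> x \<le> Z \<omega>}"
        by (intro emeasure_mono) auto
      also have "\<dots> = ennreal (prob {\<omega>\<in>space M. P \<omega> \<and> x \<le> Z \<omega>})"
        by (simp add: emeasure_eq_measure)
      also have "\<dots> \<le> ennreal (A * x powr (-a) + C * x powr (-b))"
        using tail[OF True] by (intro ennreal_leI)
      finally have le: "emeasure M {\<omega>\<in>space M. P \<omega> \<and> t < Z \<omega> \<and> x \<le> Z \<omega>} \<le> ennreal (A * x powr (-a) + C * x powr (-b))" .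
      have "ennreal (g x) * indicator {t..} x * emeasure M {\<omega>\<in>space M. P \<omega> \<and> t < Z \<omega> \<and> x \<le> Z \<omega>}
          \<le> ennreal (g x) * ennreal (A * x powr (-a) + C * x powr (-b))"
        using True le by (simp add: mult_left_mono)
      also have "\<dots> = ennreal (g x * (A * x powr (-a))) + ennreal (g x * (C * x powr (-b)))"
        using g_nn[of x] A C by (simp add: ennreal_mult[symmetric] ennreal_plus[symmetric] distrib_left del: ennreal_plus)
      finally show ?thesis using True by simp
    qed simp
    finally show "(\<integral>\<^sup>+\<omega>. ennreal (g x) * indicator {t..} x * indicator {\<omega>\<in>space M. P \<omega> \<and> t < Z \<omega> \<and> x \<le> Z \<omega>} \<omega> \<partial>M)
       \<le> ennreal (g x * (A * x powr (-a))) * indicator {t..} x + ennreal (g x * (C * x powr (-b))) * indicator {t..} x" .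
  qed
  also have "\<dots> = (\<integral>\<^sup>+x. ennreal (g x * (A * x powr (-a))) * indicator {t..} x \<partial>lborel) + (\<integral>\<^sup>+x. ennreal (g x * (C * x powr (-b))) * indicator {t..} x \<partial>lborel)"
    unfolding g_def by (intro nn_integral_add) measurable
  also have "\<dots> = ennreal (A * (p-1) / (a+1-p) * t powr (p-1-a)) + ennreal (C * (p-1) / (b+1-p) * t powr (p-1-b))"
    unfolding g_def using powr_tail_integral[OF A a p t] powr_tail_integral[OF C b p t] by simp
  finally have le2: "(\<integral>\<^sup>+x. (\<integral>\<^sup>+\<omega>. ennreal (g x) * indicator {t..} x * indicator {\<omega>\<in>space M. P \<omega> \<and> t < Z \<omega> \<and> x \<le> Z \<omega>} \<omega> \<partial>M) \<partial>lborel) \<le> ennreal (A * (p-1) / (a+1-p) * t powr (p-1-a)) + ennreal (C * (p-1) / (b+1-p) * t powr (p-1-b))" .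
  have le3: "(\<integral>\<^sup>+\<omega>. indicator {\<omega>. Z \<omega> > t \<and> P \<omega>} \<omega> * ennreal (t powr (p-1)) \<partial>M)
      \<le> ennreal (t powr (p-1) * (A * t powr (-a) + C * t powr (-b)))"
  proof -
    have "(\<integral>\<^sup>+\<omega>. indicator {\<omega>. Z \<omega> > t \<and> P \<omega>} \<omega> * ennreal (t powr (p-1)) \<partial>M)
        = (\<integral>\<^sup>+\<omega>. ennreal (t powr (p-1)) * indicator {\<omega>\<in>space M. Z \<omega> > t \<and> P \<omega>} \<omega> \<partial>M)"
      by (intro nn_integral_cong) (auto simp: indicator_def)
    also have "\<dots> = ennreal (t powr (p-1)) * emeasure M {\<omega>\<in>space M. Z \<omega> > t \<and> P \<omega>}"
      by (rule nn_integral_cmult_indicator) measurable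
    also have "\<dots> \<le> ennreal (t powr (p-1)) * ennreal (A * t powr (-a) + C * t powr (-b))"
    proof (rule mult_left_mono)
      have "emeasure M {\<omega>\<in>space M. Z \<omega> > t \<and> P \<omega>} \<le> emeasure M {\<omega>\<in>space M. P \<omega> \<and> t \<le> Z \<omega>}"
        by (intro emeasure_mono) auto
      also have "\<dots> = ennreal (prob {\<omega>\<in>space M. P \<omega> \<and> t \<le> Z \<omega>})"
        by (simp add: emeasure_eq_measure)
      also have "\<dots> \<le> ennreal (A * t powr (-a) + C * t powr (-b))"
        using tail[of t] by (intro ennreal_leI) auto
      finally show "emeasure M {\<omega>\<in>space M. Z \<omega> > t \<and> P \<omega>} \<le> ennreal (A * t powr (-a) + C * t powr (-b))" .
    qed simp
    also have "\<dots> = ennreal (t powr (p-1) * (A * t powr (-a) + C * t powr (-b)))"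
      using A C by (subst ennreal_mult) auto
    finally show ?thesis .
  qed
  have "(\<integral>\<^sup>+\<omega>. indicator {\<omega>. Z \<omega> > t \<and> P \<omega>} \<omega> * ennreal (Z \<omega> powr (p-1)) \<partial>M)
    \<le> ennreal (t powr (p-1) * (A * t powr (-a) + C * t powr (-b))) + (ennreal (A * (p-1) / (a+1-p) * t powr (p-1-a)) + ennreal (C * (p-1) / (b+1-p) * t powr (p-1-b)))"
    unfolding eq1 by (intro add_mono le2 le3)
  also have "\<dots> = ennreal (t powr (p-1) * (A * t powr (-a) + C * t powr (-b)) + (A * (p-1) / (a+1-p) * t powr (p-1-a) + C * (p-1) / (b+1-p) * t powr (p-1-b)))"
    using A C a b p t by (simp add: ennreal_plus[symmetric] del: ennreal_plus)
  also have "t powr (p-1) * (A * t powr (-a) + C * t powr (-b)) + (A * (p-1) / (a+1-p) * t powr (p-1-a) + C * (p-1) / (b+1-p) * t powr (p-1-b))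
      = A * (a / (a+1-p)) * t powr (p-1-a) + C * (b / (b+1-p)) * t powr (p-1-b)"
  proof -
    have e1: "t powr (p-1) * t powr (-a) = t powr (p-1-a)" "t powr (p-1) * t powr (-b) = t powr (p-1-b)"
      by (simp_all add: powr_add[symmetric])
    have n1: "a+1-p \<noteq> 0" "b+1-p \<noteq> 0" using a b by auto
    have alg: "(A * u + C * v) + (A * (p-1) / (a+1-p) * u + C * (p-1) / (b+1-p) * v)
       = A * (a / (a+1-p)) * u + C * (b / (b+1-p)) * v" for u v
    proof -
      have "A * u + A * (p-1) / (a+1-p) * u = A * (a / (a+1-p)) * u" using n1 by (simp add: field_simps)
      moreover have "C * v + C * (p-1) / (b+1-p) * v = C * (b / (b+1-p)) * v" using n1 by (simp add: field_simps)
      ultimately show ?thesis by simp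
    qed
    have "t powr (p-1) * (A * t powr (-a) + C * t powr (-b)) = A * t powr (p-1-a) + C * t powr (p-1-b)"
      by (simp only: distrib_left e1[symmetric] ac_simps)
    then show ?thesis using alg by simp
  qed
  finally show ?thesis .
qed



lemma (in prob_space) chernoff_trunc:
  fixes Y :: "nat \<Rightarrow> 'a \<Rightarrow> real" and x y h :: real and n :: nat
  assumes rv: "\<And>k. k \<ge> 1 \<Longrightarrow> Y k \<in> borel_measurable M"
    and ind: "indep_vars (\<lambda>_. borel) Y {1..}"
    and ident: "\<And>k. k \<ge> 1 \<Longrightarrow> distr M borel (Y k) = distr M borel (Y 1)"
    and int1: "integrable M (Y 1)" and int2: "integrable M (\<lambda>\<omega>. (Y 1 \<omega>)\<^sup>2)"
    and mean0: "expectation (Y 1) = 0"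
    and h: "h > 0" and y: "y > 0"
  shows "prob {\<omega>\<in>space M. x \<le> (\<Sum>i=1..n. min (Y i \<omega>) y)}
     \<le> exp (-(h*x)) * (1 + (exp (h*y) - 1 - h*y) / y\<^sup>2 * expectation (\<lambda>\<omega>. (Y 1 \<omega>)\<^sup>2)) ^ n"
proof -
  define K where "K = (exp (h*y) - 1 - h*y) / y\<^sup>2"
  define B where "B = expectation (\<lambda>\<omega>. (Y 1 \<omega>)\<^sup>2)"
  define W where "W i \<omega> = exp (h * min (Y i \<omega>) y)" for i \<omega>
  have K: "K \<ge> 0"
  proof -
    have e: "1 + h*y \<le> exp (h*y)" by (rule exp_ge_add_one_self)
    have "0 \<le> exp (h*y) - 1 - h*y" using e by linarith
    then show ?thesis unfolding K_def by simp
  qed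
  have B: "B \<ge> 0" unfolding B_def by simp
  have Wm: "W i \<in> borel_measurable M" if "i \<ge> 1" for i
    unfolding W_def using rv[OF that] by measurable
  have Wb: "norm (W i \<omega>) \<le> exp (h*y)" for i \<omega>
    unfolding W_def using h by simp
  have Wint: "integrable M (W i)" if "i \<ge> 1" for i
    by (rule integrable_const_bound[where B="exp (h*y)"]) (use Wm[OF that] Wb in auto)
  have indW: "indep_vars (\<lambda>_. borel) W {1..n}"
  proof -
    have "indep_vars (\<lambda>_. borel) (\<lambda>i \<omega>. (\<lambda>v. exp (h * min v y)) (Y i \<omega>)) {1..}"
      by (rule indep_vars_compose2[OF ind]) measurable
    then have "indep_vars (\<lambda>_. borel) W {1..}" unfolding W_def by simp
    then show ?thesis by (rule indep_vars_subset) auto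
  qed
  have EW: "expectation (W i) = expectation (W 1)" if "i \<ge> 1" for i
  proof -
    have "expectation (W i) = integral\<^sup>L (distr M borel (Y i)) (\<lambda>v. exp (h * min v y))"
      unfolding W_def by (subst integral_distr) (use rv[OF that] in auto)
    also have "\<dots> = integral\<^sup>L (distr M borel (Y 1)) (\<lambda>v. exp (h * min v y))"
      using ident[OF that] by simp
    also have "\<dots> = expectation (W 1)"
      unfolding W_def by (subst integral_distr) (use rv[of 1] in auto)
    finally show ?thesis .
  qed
  have EW1: "expectation (W 1) \<le> 1 + K * B"
  proof -
    have "expectation (W 1) \<le> expectation (\<lambda>\<omega>. 1 + h * Y 1 \<omega> + K * (Y 1 \<omega>)\<^sup>2)"
    proof (rule integral_mono)
      show "integrable M (W 1)" by (rule Wint) simp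
      show "integrable M (\<lambda>\<omega>. 1 + h * Y 1 \<omega> + K * (Y 1 \<omega>)\<^sup>2)"
        using int1 int2 by auto
      fix \<omega> assume "\<omega> \<in> space M"
      have "W 1 \<omega> \<le> 1 + h * min (Y 1 \<omega>) y + K * (min (Y 1 \<omega>) y)\<^sup>2"
        unfolding W_def K_def using exp_trunc_bound[OF h y, of "min (Y 1 \<omega>) y"] by simp
      also have "\<dots> \<le> 1 + h * Y 1 \<omega> + K * (Y 1 \<omega>)\<^sup>2"
      proof -
        have "h * min (Y 1 \<omega>) y \<le> h * Y 1 \<omega>" using h by (intro mult_left_mono) auto
        moreover have "(min (Y 1 \<omega>) y)\<^sup>2 \<le> (Y 1 \<omega>)\<^sup>2"
        proof (cases "Y 1 \<omega> \<le> y")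
          case False
          then show ?thesis using y by (simp add: power_mono)
        qed simp
        ultimately show ?thesis using K by (smt (verit) mult_left_mono)
      qed
      finally show "W 1 \<omega> \<le> 1 + h * Y 1 \<omega> + K * (Y 1 \<omega>)\<^sup>2" .
    qed
    also have "\<dots> = 1 + h * expectation (Y 1) + K * B"
      unfolding B_def using int1 int2 by (simp add: prob_space)
    finally show ?thesis using mean0 by simp
  qed
  have EW0: "expectation (W 1) \<ge> 0" unfolding W_def by simp
  have prodint: "integrable M (\<lambda>\<omega>. \<Prod>i\<in>{1..n}. W i \<omega>)"
    by (rule indep_vars_integrable[OF _ indW]) (auto intro: Wint)
  have "prob {\<omega>\<in>space M. x \<le> (\<Sum>i=1..n. min (Y i \<omega>) y)}
      = prob {\<omega>\<in>space M. exp (h*x) \<le> (\<Prod>i\<in>{1..n}. W i \<omega>)}"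
  proof -
    have "(\<Prod>i\<in>{1..n}. W i \<omega>) = exp (h * (\<Sum>i=1..n. min (Y i \<omega>) y))" for \<omega>
      unfolding W_def by (simp add: exp_sum sum_distrib_left)
    moreover have "(x \<le> s) = (exp (h*x) \<le> exp (h * s))" for s using h by simp
    ultimately show ?thesis by simp
  qed
  also have "\<dots> \<le> expectation (\<lambda>\<omega>. \<Prod>i\<in>{1..n}. W i \<omega>) / exp (h*x)"
    by (rule integral_Markov_inequality_measure[OF prodint, where A="space M"])
       (auto simp: W_def intro!: prod_nonneg)
  also have "expectation (\<lambda>\<omega>. \<Prod>i\<in>{1..n}. W i \<omega>) = (\<Prod>i\<in>{1..n}. expectation (W i))"
    by (rule indep_vars_lebesgue_integral[OF _ indW]) (auto intro: Wint)
  also have "(\<Prod>i\<in>{1..n}. expectation (W i)) = (\<Prod>i\<in>{1..n}. expectation (W 1))"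
    by (intro prod.cong refl EW) auto
  also have "\<dots> = expectation (W 1) ^ n" by simp
  finally have 1: "prob {\<omega>\<in>space M. x \<le> (\<Sum>i=1..n. min (Y i \<omega>) y)} \<le> expectation (W 1) ^ n / exp (h*x)" .
  have "expectation (W 1) ^ n \<le> (1 + K * B) ^ n"
    using EW0 EW1 by (intro power_mono) auto
  then have "expectation (W 1) ^ n / exp (h*x) \<le> (1 + K * B) ^ n / exp (h*x)"
    by (rule divide_right_mono) simp
  with 1 have "prob {\<omega>\<in>space M. x \<le> (\<Sum>i=1..n. min (Y i \<omega>) y)} \<le> (1 + K * B) ^ n / exp (h*x)"
    by linarith
  then show ?thesis unfolding K_def B_def by (simp add: exp_minus divide_inverse mult.commute)
qed



lemma fn_opt:
  fixes B x r :: real and n :: nat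
  assumes B: "B > 0" and x: "x > 0" and r: "r > 0" and n: "n \<ge> 1"
  defines "y \<equiv> x / r"
  defines "h \<equiv> ln (1 + x * y / (real n * B)) / y"
  shows "h > 0"
    and "exp (-(h*x)) * (1 + (exp (h*y) - 1 - h*y) / y\<^sup>2 * B) ^ n
         \<le> (exp 1 * r * B) powr r * real n powr r * x powr (-(2*r))"
proof -
  have y: "y > 0" using x r by (simp add: y_def)
  have N: "real n > 0" using n by simp
  define L where "L = ln (1 + x * y / (real n * B))"
  have q0: "x * y / (real n * B) > 0" using x y N B by simp
  have L: "L > 0" unfolding L_def using q0 by simp
  have hy: "h * y = L" unfolding h_def L_def using y by simp
  show "h > 0" unfolding h_def using L y by (simp add: L_def)
  have ehy: "exp (h*y) = 1 + x * y / (real n * B)" unfolding hy L_def using q0 by simp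
  define K where "K = (exp (h*y) - 1 - h*y) / y\<^sup>2"
  have K: "K \<ge> 0"
  proof -
    have e: "1 + h*y \<le> exp (h*y)" by (rule exp_ge_add_one_self)
    have "0 \<le> exp (h*y) - 1 - h*y" using e by linarith
    then show ?thesis unfolding K_def by simp
  qed
  have "(1 + K * B) ^ n \<le> exp (K * B) ^ n"
  proof (rule power_mono)
    show "1 + K * B \<le> exp (K * B)" by (rule exp_ge_add_one_self)
    show "0 \<le> 1 + K * B" using K B by simp
  qed
  also have "\<dots> = exp (real n * K * B)" by (simp add: exp_of_nat_mult[symmetric] mult.assoc)
  finally have 1: "exp (-(h*x)) * (1 + K * B) ^ n \<le> exp (-(h*x) + real n * K * B)"
  proof -
    assume a: "(1 + K * B) ^ n \<le> exp (real n * K * B)"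
    have "exp (-(h*x)) * (1 + K * B) ^ n \<le> exp (-(h*x)) * exp (real n * K * B)"
      using a by (intro mult_left_mono) auto
    then show ?thesis by (simp add: exp_add[symmetric])
  qed
  have xy: "x / y = r" using x r by (simp add: y_def)
  have hx: "h * x = r * L" using hy xy y by (simp add: h_def field_simps)
  have nKB: "real n * K * B = r - real n * B * L / y\<^sup>2"
  proof -
    have "real n * K * B = real n * B * (x * y / (real n * B) - L) / y\<^sup>2"
      unfolding K_def ehy unfolding hy by (simp add: algebra_simps)
    also have "\<dots> = x * y / y\<^sup>2 - real n * B * L / y\<^sup>2" using N B y by (simp add: field_simps)
    also have "x * y / y\<^sup>2 = r" using xy y by (simp add: power2_eq_square)
    finally show ?thesis .
  qed
  define D where "D = exp 1 * r * B * real n / x\<^sup>2"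
  have D: "D > 0" unfolding D_def using r B N x by simp
  have L2: "L \<ge> ln (x * y / (real n * B))" unfolding L_def using q0 by simp
  have lnq: "ln (x * y / (real n * B)) = - ln D + 1"
  proof -
    have "x * y / (real n * B) = exp 1 / D" unfolding D_def y_def using x r N B
      by (simp add: field_simps power2_eq_square)
    then show ?thesis using D by (simp add: ln_div)
  qed
  have "-(h*x) + real n * K * B \<le> r * ln D"
  proof -
    have "real n * B * L / y\<^sup>2 \<ge> 0" using N B L by simp
    then have "-(h*x) + real n * K * B \<le> r - r * L" using hx nKB by linarith
    also have "\<dots> \<le> r - r * (- ln D + 1)" using L2 lnq r by (simp add: mult_left_mono)
    also have "\<dots> = r * ln D" by (simp add: algebra_simps)
    finally show ?thesis .
  qed
  then have "exp (-(h*x) + real n * K * B) \<le> D powr r" using D by (simp add: powr_def)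
  also have "D powr r = (exp 1 * r * B) powr r * real n powr r * x powr (-(2*r))"
  proof -
    have Deq: "D = (exp 1 * r * B) * real n * (1 / x\<^sup>2)" by (simp add: D_def)
    have a1: "((exp 1 * r * B) * real n * (1/x\<^sup>2)) powr r = ((exp 1 * r * B) * real n) powr r * (1/x\<^sup>2) powr r"
      by (rule powr_mult)
    have a2: "((exp 1 * r * B) * real n) powr r = (exp 1 * r * B) powr r * real n powr r"
      by (rule powr_mult)
    have "D powr r = (exp 1 * r * B) powr r * real n powr r * (1 / x\<^sup>2) powr r"
      by (subst Deq) (simp only: a1 a2)
    also have "(1 / x\<^sup>2) powr r = x powr (-(2*r))"
    proof -
      have x2: "x\<^sup>2 = x powr 2" using powr_realpow[OF x, of 2] by simp
      have "(1 / x\<^sup>2) powr r = 1 / (x powr 2) powr r" by (simp only: x2 powr_divide powr_one_gt_zero_iff) simp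
      also have "\<dots> = 1 / x powr (2 * r)" by (simp only: powr_powr)
      also have "\<dots> = x powr (-(2*r))" by (simp only: powr_minus_divide)
      finally show ?thesis .
    qed
    finally show ?thesis .
  qed
  finally show "exp (-(h*x)) * (1 + (exp (h*y) - 1 - h*y) / y\<^sup>2 * B) ^ n
         \<le> (exp 1 * r * B) powr r * real n powr r * x powr (-(2*r))"
    using 1 unfolding K_def by linarith
qed



theorem lemma4:
  fixes M :: "'a measure" and Y :: "nat \<Rightarrow> 'a \<Rightarrow> real" and F :: "nat \<Rightarrow> 'a measure"
    and \<sigma> :: "'a \<Rightarrow> enat" and p q r t :: real and n :: nat
  assumes M: "prob_space M"
    and Y_rv: "\<And>k. k \<ge> 1 \<Longrightarrow> Y k \<in> borel_measurable M"
    and Y_indep: "prob_space.indep_vars M (\<lambda>_. borel) Y {1..}"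
    and Y_ident: "\<And>k. k \<ge> 1 \<Longrightarrow> distr M borel (Y k) = distr M borel (Y 1)"
    and mean0: "prob_space.expectation M (Y 1) = 0"
    and p: "p \<ge> 1"
    and q: "q \<ge> max p 2"
    and moment: "integrable M (\<lambda>x. \<bar>Y 1 x\<bar> powr q)"
    and filt: "filtration (space M) F"
    and filt_sub: "\<And>k. sets (F k) \<subseteq> sets M"
    and Y_adapted: "\<And>k. k \<ge> 1 \<Longrightarrow> Y k \<in> borel_measurable (F k)"
    and Y_indep_past: "\<And>k. k \<ge> 1 \<Longrightarrow>
        prob_space.indep_set M {Y k -` A \<inter> space M | A. A \<in> sets borel} (sets (F (k - 1)))"
    and stop: "stopping_time_enat F \<sigma>"
    and r: "r > max ((p - 1) / 2) 1"
    and t: "t > 0"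
    and n: "n \<ge> 1"
  defines "T \<equiv> \<lambda>m x. \<Sum>i=1..m. Y i x"
  shows "prob_space.expectation M
           (\<lambda>x. indicator {x. T n x > t \<and> \<sigma> x > enat n} x * T n x powr (p - 1))
     \<le> r powr q * (q / (q + 1 - p)) * prob_space.expectation M (\<lambda>x. \<bar>Y 1 x\<bar> powr q)
         * t powr (p - 1 - q) * (\<Sum>i=1..n. prob_space.prob M {x \<in> space M. \<sigma> x > enat (i - 1)})
       + (exp 1 * r * prob_space.expectation M (\<lambda>x. (Y 1 x)\<^sup>2)) powr r * real n powr r
         * (2 * r / (2 * r + 1 - p)) * t powr (p - 1 - 2 * r)"
proof -
  interpret prob_space M by (rule M)
  define B where "B = expectation (\<lambda>x. (Y 1 x)\<^sup>2)"
  define Q where "Q = expectation (\<lambda>x. \<bar>Y 1 x\<bar> powr q)"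
  define S where "S = (\<Sum>i=1..n. prob {x \<in> space M. \<sigma> x > enat (i - 1)})"
  define A where "A = r powr q * Q * S"
  define C where "C = (exp 1 * r * B) powr r * real n powr r"
  have r0: "r > 1" using r by simp
  have q2: "q \<ge> 2" and qp: "q \<ge> p" using q by auto
  have Y1m[measurable]: "Y 1 \<in> borel_measurable M" by (rule Y_rv) simp
  have int2: "integrable M (\<lambda>x. (Y 1 x)\<^sup>2)"
  proof (rule Bochner_Integration.integrable_bound)
    show "integrable M (\<lambda>x. 1 + \<bar>Y 1 x\<bar> powr q)" using moment by simp
    show "(\<lambda>x. (Y 1 x)\<^sup>2) \<in> borel_measurable M" by measurable
    show "AE x in M. norm ((Y 1 x)\<^sup>2) \<le> norm (1 + \<bar>Y 1 x\<bar> powr q)"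
    proof (rule AE_I2)
      fix x
      show "norm ((Y 1 x)\<^sup>2) \<le> norm (1 + \<bar>Y 1 x\<bar> powr q)"
      proof (cases "\<bar>Y 1 x\<bar> \<le> 1")
        case True
        then have "(Y 1 x)\<^sup>2 \<le> 1" by (simp add: abs_square_le_1)
        moreover have "0 \<le> \<bar>Y 1 x\<bar> powr q" by simp
        ultimately have "(Y 1 x)\<^sup>2 \<le> 1 + \<bar>Y 1 x\<bar> powr q" by linarith
        then show ?thesis by simp
      next
        case False
        then have "(Y 1 x)\<^sup>2 = \<bar>Y 1 x\<bar> powr 2" by (simp add: powr_realpow[symmetric])
        also have "\<dots> \<le> \<bar>Y 1 x\<bar> powr q" using False q2 by (intro powr_mono) auto
        finally show ?thesis by simp
      qed
    qed
  qed
  have int1: "integrable M (Y 1)"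
  proof (rule Bochner_Integration.integrable_bound)
    show "integrable M (\<lambda>x. 1 + (Y 1 x)\<^sup>2)" using int2 by simp
    show "Y 1 \<in> borel_measurable M" by measurable
    show "AE x in M. norm (Y 1 x) \<le> norm (1 + (Y 1 x)\<^sup>2)"
    proof (rule AE_I2)
      fix x
      have "\<bar>Y 1 x\<bar> \<le> 1 + (Y 1 x)\<^sup>2"
      proof (cases "\<bar>Y 1 x\<bar> \<le> 1")
        case True then show ?thesis by (smt (verit) zero_le_power2)
      next
        case False
        then have "\<bar>Y 1 x\<bar> * 1 \<le> \<bar>Y 1 x\<bar> * \<bar>Y 1 x\<bar>" by (intro mult_left_mono) auto
        then show ?thesis by (simp add: power2_eq_square)
      qed
      then show "norm (Y 1 x) \<le> norm (1 + (Y 1 x)\<^sup>2)" by simp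
    qed
  qed
  have B0: "B \<ge> 0" unfolding B_def by simp
  have Q0: "Q \<ge> 0" unfolding Q_def by simp
  have S0: "S \<ge> 0" unfolding S_def by (intro sum_nonneg) simp
  have A0: "A \<ge> 0" unfolding A_def using Q0 S0 by simp
  have C0: "C \<ge> 0" unfolding C_def by simp
  have spF: "space (F k) = space M" for k using filt by (simp add: filtration.space_F)
  have sig_F: "{x\<in>space M. enat k < \<sigma> x} \<in> sets (F k)" for k
  proof -
    have "{x\<in>space (F k). \<sigma> x \<le> enat k} \<in> sets (F k)"
      using stop unfolding stopping_time_enat_def Measurable.pred_def by blast
    then have "space (F k) - {x\<in>space (F k). \<sigma> x \<le> enat k} \<in> sets (F k)" by auto
    moreover have "space (F k) - {x\<in>space (F k). \<sigma> x \<le> enat k} = {x\<in>space M. enat k < \<sigma> x}"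
      using spF by auto
    ultimately show ?thesis by simp
  qed
  have sig_M: "{x\<in>space M. enat k < \<sigma> x} \<in> sets M" for k using sig_F filt_sub by blast
  have sig_pred[measurable]: "Measurable.pred M (\<lambda>x. enat k < \<sigma> x)" for k
    unfolding Measurable.pred_def using sig_M .
  have Tm[measurable]: "T n \<in> borel_measurable M"
    unfolding T_def by (intro borel_measurable_sum) (auto intro: Y_rv)
  have tail: "prob {\<omega>\<in>space M. enat n < \<sigma> \<omega> \<and> x \<le> T n \<omega>} \<le> A * x powr (-q) + C * x powr (-(2*r))"
    if x: "x \<ge> t" for x
  proof -
    have x0: "x > 0" using x t by linarith
    define y where "y = x / r"
    have y0: "y > 0" using x0 r0 by (simp add: y_def)
    define E where "E i = {\<omega>\<in>space M. y < Y i \<omega> \<and> enat (i - 1) < \<sigma> \<omega>}" for i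
    define G where "G = {\<omega>\<in>space M. x \<le> (\<Sum>i=1..n. min (Y i \<omega>) y)}"
    have Em: "E i \<in> sets M" if "i \<ge> 1" for i
    proof -
      have [measurable]: "Y i \<in> borel_measurable M" using Y_rv[OF that] .
      show ?thesis unfolding E_def by measurable
    qed
    have Gm: "G \<in> sets M"
    proof -
      have "(\<lambda>\<omega>. \<Sum>i=1..n. min (Y i \<omega>) y) \<in> borel_measurable M"
        by (intro borel_measurable_sum borel_measurable_min) (auto intro: Y_rv)
      then show ?thesis unfolding G_def by measurable
    qed
    have sub: "{\<omega>\<in>space M. enat n < \<sigma> \<omega> \<and> x \<le> T n \<omega>} \<subseteq> (\<Union>i\<in>{1..n}. E i) \<union> G"
    proof
      fix \<omega> assume w: "\<omega> \<in> {\<omega>\<in>space M. enat n < \<sigma> \<omega> \<and> x \<le> T n \<omega>}"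
      show "\<omega> \<in> (\<Union>i\<in>{1..n}. E i) \<union> G"
      proof (cases "\<forall>i\<in>{1..n}. Y i \<omega> \<le> y")
        case True
        then have "(\<Sum>i=1..n. min (Y i \<omega>) y) = T n \<omega>" unfolding T_def
          by (intro sum.cong) auto
        then show ?thesis using w by (auto simp: G_def)
      next
        case False
        then obtain i where i: "i \<in> {1..n}" "Y i \<omega> > y" by auto
        have "enat (i - 1) < \<sigma> \<omega>"
          using w i by (metis (no_types, lifting) atLeastAtMost_iff diff_le_self enat_ord_simps(1) le_trans mem_Collect_eq order_le_less_trans)
        then show ?thesis using w i by (auto simp: E_def)
      qed
    qed
    have "prob {\<omega>\<in>space M. enat n < \<sigma> \<omega> \<and> x \<le> T n \<omega>} \<le> prob ((\<Union>i\<in>{1..n}. E i) \<union> G)"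
      using sub Em Gm by (intro finite_measure_mono) auto
    also have "\<dots> \<le> prob (\<Union>i\<in>{1..n}. E i) + prob G"
      using Em Gm by (intro measure_Un_le) auto
    also have "prob (\<Union>i\<in>{1..n}. E i) \<le> (\<Sum>i\<in>{1..n}. prob (E i))"
      using Em by (intro finite_measure_subadditive_finite) auto
    also have "(\<Sum>i\<in>{1..n}. prob (E i)) \<le> A * x powr (-q)"
    proof -
      have PY: "prob {\<omega>\<in>space M. y < Y 1 \<omega>} \<le> r powr q * Q * x powr (-q)"
      proof -
        have "prob {\<omega>\<in>space M. y < Y 1 \<omega>} \<le> prob {\<omega>\<in>space M. y powr q \<le> \<bar>Y 1 \<omega>\<bar> powr q}"
        proof (rule finite_measure_mono)
          show "{\<omega>\<in>space M. y < Y 1 \<omega>} \<subseteq> {\<omega>\<in>space M. y powr q \<le> \<bar>Y 1 \<omega>\<bar> powr q}"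
            using y0 q2 by (auto intro!: powr_mono2)
          show "{\<omega>\<in>space M. y powr q \<le> \<bar>Y 1 \<omega>\<bar> powr q} \<in> sets M" by measurable
        qed
        also have "\<dots> \<le> Q / y powr q" unfolding Q_def
          by (rule integral_Markov_inequality_measure[OF moment, where A="space M"]) (use y0 in auto)
        also have "Q / y powr q = r powr q * Q * x powr (-q)"
          unfolding y_def using x0 r0 by (simp add: powr_divide powr_minus_divide)
        finally show ?thesis .
      qed
      have "prob (E i) \<le> r powr q * Q * x powr (-q) * prob {x \<in> space M. \<sigma> x > enat (i - 1)}"
        if i: "i \<in> {1..n}" for i
      proof -
        have i1: "i \<ge> 1" using i by auto
        have "E i = (Y i -` {y<..} \<inter> space M) \<inter> {x \<in> space M. \<sigma> x > enat (i - 1)}"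
          by (auto simp: E_def)
        moreover have mem: "Y i -` {y<..} \<inter> space M \<in> {Y i -` A \<inter> space M | A. A \<in> sets borel}"
          by (rule CollectI, rule exI[of _ "{y<..}"]) simp
        ultimately have "prob (E i) = prob (Y i -` {y<..} \<inter> space M) * prob {x \<in> space M. \<sigma> x > enat (i - 1)}"
          using indep_setD[OF Y_indep_past[OF i1] mem sig_F[of "i - 1"]] by simp
        also have "prob (Y i -` {y<..} \<inter> space M) = prob {\<omega>\<in>space M. y < Y 1 \<omega>}"
        proof -
          have "prob (Y i -` {y<..} \<inter> space M) = measure (distr M borel (Y i)) {y<..}"
            by (rule measure_distr[symmetric]) (use Y_rv[OF i1] in auto)
          also have "\<dots> = measure (distr M borel (Y 1)) {y<..}" using Y_ident[OF i1] by simp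
          also have "\<dots> = prob (Y 1 -` {y<..} \<inter> space M)"
            by (rule measure_distr[OF Y1m]) simp
          also have "Y 1 -` {y<..} \<inter> space M = {\<omega>\<in>space M. y < Y 1 \<omega>}" by auto
          finally show ?thesis .
        qed
        finally show ?thesis using PY by (simp add: mult_right_mono)
      qed
      then have "(\<Sum>i\<in>{1..n}. prob (E i)) \<le> (\<Sum>i\<in>{1..n}. r powr q * Q * x powr (-q) * prob {x \<in> space M. \<sigma> x > enat (i - 1)})"
        by (intro sum_mono) auto
      also have "\<dots> = A * x powr (-q)" unfolding A_def S_def by (simp add: sum_distrib_left mult_ac)
      finally show ?thesis .
    qed
    also have "prob G \<le> C * x powr (-(2*r))"
    proof (cases "B > 0")
      case True
      define h where "h = ln (1 + x * y / (real n * B)) / y"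
      have h0: "h > 0" and opt: "exp (-(h*x)) * (1 + (exp (h*y) - 1 - h*y) / y\<^sup>2 * B) ^ n
         \<le> (exp 1 * r * B) powr r * real n powr r * x powr (-(2*r))"
        using fn_opt[OF True x0 _ n, of r] r0 unfolding h_def y_def by auto
      have "prob G \<le> exp (-(h*x)) * (1 + (exp (h*y) - 1 - h*y) / y\<^sup>2 * B) ^ n"
        unfolding G_def B_def
        by (rule chernoff_trunc[OF Y_rv Y_indep Y_ident int1 int2 mean0 h0 y0])
      also note opt
      finally show ?thesis unfolding C_def .
    next
      case False
      then have B00: "B = 0" using B0 by simp
      have ch: "prob G \<le> exp (-(h*x))" if h: "h > 0" for h
        using chernoff_trunc[OF Y_rv Y_indep Y_ident int1 int2 mean0 h y0, of x n] B00
        unfolding G_def B_def by simp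
      have "prob G \<le> 0"
      proof (rule ccontr)
        assume "\<not> prob G \<le> 0"
        then have P0: "prob G > 0" by simp
        define h where "h = (\<bar>ln (prob G)\<bar> + 1) / x"
        have h0: "h > 0" using x0 by (simp add: h_def)
        have "h * x = \<bar>ln (prob G)\<bar> + 1" using x0 by (simp add: h_def)
        then have "-(h*x) < ln (prob G)" by linarith
        then have "exp (-(h*x)) < prob G" using P0 by (metis exp_less_cancel_iff exp_ln)
        with ch[OF h0] show False by simp
      qed
      moreover have "C * x powr (-(2*r)) \<ge> 0" using C0 by simp
      ultimately show ?thesis by linarith
    qed
    finally show ?thesis by simp
  qed
  have lc: "(\<integral>\<^sup>+\<omega>. indicator {\<omega>. T n \<omega> > t \<and> enat n < \<sigma> \<omega>} \<omega> * ennreal (T n \<omega> powr (p-1)) \<partial>M)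
     \<le> ennreal (A * (q / (q+1-p)) * t powr (p-1-q) + C * ((2*r) / ((2*r)+1-p)) * t powr (p-1-(2*r)))"
  proof (rule layer_cake_bound[OF Tm sig_pred p t A0 C0])
    show "q > p - 1" using qp by simp
    show "2*r > p - 1" using r by simp
    fix x assume "x \<ge> t"
    then show "prob {\<omega>\<in>space M. enat n < \<sigma> \<omega> \<and> x \<le> T n \<omega>} \<le> A * x powr (-q) + C * x powr (-(2*r))"
      by (rule tail)
  qed
  define R where "R = r powr q * (q / (q + 1 - p)) * expectation (\<lambda>x. \<bar>Y 1 x\<bar> powr q)
         * t powr (p - 1 - q) * (\<Sum>i=1..n. prob {x \<in> space M. \<sigma> x > enat (i - 1)})
       + (exp 1 * r * expectation (\<lambda>x. (Y 1 x)\<^sup>2)) powr r * real n powr r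
         * (2 * r / (2 * r + 1 - p)) * t powr (p - 1 - 2 * r)"
  have R_eq: "A * (q / (q+1-p)) * t powr (p-1-q) + C * ((2*r) / ((2*r)+1-p)) * t powr (p-1-(2*r)) = R"
    unfolding R_def A_def C_def Q_def B_def S_def by (simp add: mult_ac)
  have R0: "R \<ge> 0"
  proof -
    have "q + 1 - p > 0" "2 * r + 1 - p > 0" using qp r by auto
    then show ?thesis unfolding R_def using Q0 S0 r0 q2
      by (intro add_nonneg_nonneg mult_nonneg_nonneg divide_nonneg_nonneg) (auto simp: Q_def S_def)
  qed
  define f where "f x = indicator {x. T n x > t \<and> \<sigma> x > enat n} x * T n x powr (p - 1)" for x
  have f0: "f x \<ge> 0" for x unfolding f_def by simp
  show ?thesis
  proof (cases "integrable M f")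
    case True
    have "ennreal (expectation f) = (\<integral>\<^sup>+\<omega>. ennreal (f \<omega>) \<partial>M)"
      by (rule nn_integral_eq_integral[symmetric]) (use True f0 in auto)
    also have "\<dots> = (\<integral>\<^sup>+\<omega>. indicator {\<omega>. T n \<omega> > t \<and> enat n < \<sigma> \<omega>} \<omega> * ennreal (T n \<omega> powr (p-1)) \<partial>M)"
      by (intro nn_integral_cong) (simp add: f_def indicator_def)
    also note lc
    finally have "ennreal (expectation f) \<le> ennreal R" using R_eq by simp
    then have "expectation f \<le> R" using R0 by (simp add: ennreal_le_iff)
    then show ?thesis unfolding f_def R_def .
  next
    case False
    then have "expectation f = 0" by (rule not_integrable_integral_eq)
    then show ?thesis using R0 unfolding f_def R_def by simp
  qed
qed


end
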